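(* Let $(x,y,\beta)$ be finitely valued random variables with $x,y\in\{0,1\}$ and arbitrary joint distribution. Alice receives $x$; Bob receives $y$ and the additional variable $\beta$, which may be correlated with both $x$ and $y$. Suppose Alice outputs $a=f(x,\lambda_A)$ and Bob outputs $b=g(y,\beta,\lambda_B)$, where $\lambda_A,\lambda_B$ are local random variables such that $\lambda_A$, $\lambda_B$ and $(x,y,\beta)$ are mutually independent; the parties have no other resources. If the PR-correlations $a\oplus b=xy$ hold with probability one, then for every value $\beta_0$ with $P(\beta=\beta_0)>0$ there exists a pair $(x_0,y_0)\in\{0,1\}^2$ with $P(x=x_0,y=y_0\mid\beta=\beta_0)=0$. *)

theory Defs
  imports "HOL-Probability.Probability"
begin

text \<open>Mutual independence of three random variables with (possibly) different
  codomain types, written out exactly as HOL-Probability's indep_vars unfolds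
  (measurability plus independence of the generated sigma-algebras).\<close>
definition indep3 ::
  "'w measure \<Rightarrow> 'a measure \<Rightarrow> ('w \<Rightarrow> 'a) \<Rightarrow> 'b measure \<Rightarrow> ('w \<Rightarrow> 'b)
     \<Rightarrow> 'c measure \<Rightarrow> ('w \<Rightarrow> 'c) \<Rightarrow> bool" where
  "indep3 M M1 X1 M2 X2 M3 X3 \<longleftrightarrow>
     X1 \<in> measurable M M1 \<and> X2 \<in> measurable M M2 \<and> X3 \<in> measurable M M3 \<and>
     prob_space.indep_sets M
       (\<lambda>i::nat. if i = 0 then {X1 -` A \<inter> space M | A. A \<in> sets M1}
                else if i = 1 then {X2 -` A \<inter> space M | A. A \<in> sets M2}
                else {X3 -` A \<inter> space M | A. A \<in> sets M3})
       {0, 1, 2}"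

end

theory Submission
  imports Defs
begin

theorem lemma3:
  fixes M :: "'w measure"
    and X Y :: "'w \<Rightarrow> bool"
    and B :: "'w \<Rightarrow> 'b"
    and MA :: "'la measure" and LA :: "'w \<Rightarrow> 'la"
    and MB :: "'lb measure" and LB :: "'w \<Rightarrow> 'lb"
    and f :: "bool \<Rightarrow> 'la \<Rightarrow> bool"
    and g :: "bool \<Rightarrow> 'b \<Rightarrow> 'lb \<Rightarrow> bool"
  assumes "prob_space M"
    and "X \<in> measurable M (count_space UNIV)"
    and "Y \<in> measurable M (count_space UNIV)"
    and "B \<in> measurable M (count_space UNIV)"
    and "finite (B ` space M)"
    and "indep3 M MA LA MB LB (count_space UNIV) (\<lambda>w. (X w, Y w, B w))"
    and "\<And>x. f x \<in> measurable MA (count_space UNIV)"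
    and "\<And>y b. g y b \<in> measurable MB (count_space UNIV)"
    and "AE w in M. (f (X w) (LA w) \<noteq> g (Y w) (B w) (LB w)) = (X w \<and> Y w)"
  shows "\<forall>\<beta>0. \<P>(w in M. B w = \<beta>0) > 0 \<longrightarrow>
           (\<exists>x0 y0. \<P>(w in M. X w = x0 \<and> Y w = y0 \<bar> B w = \<beta>0) = 0)"
proof (intro allI impI)
  fix \<beta>0 assume pb: "\<P>(w in M. B w = \<beta>0) > 0"
  interpret prob_space M by fact
  note ind = assms(6)[unfolded indep3_def]
  have mLA: "LA \<in> measurable M MA" and mLB: "LB \<in> measurable M MB" using ind by auto
  have isets: "indep_sets (\<lambda>i::nat. if i = 0 then {LA -` A \<inter> space M | A. A \<in> sets MA}
                else if i = 1 then {LB -` A \<inter> space M | A. A \<in> sets MB}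
                else {(\<lambda>w. (X w, Y w, B w)) -` A \<inter> space M | A. A \<in> sets (count_space UNIV)}) {0, 1, 2}"
    using ind by blast
  define E where "E x y = {w\<in>space M. X w = x \<and> Y w = y \<and> B w = \<beta>0}" for x y
  define U where "U x p = {w\<in>space M. f x (LA w) = p}" for x p
  define V where "V y q = {w\<in>space M. g y \<beta>0 (LB w) = q}" for y q
  have evU: "U x p \<in> events" for x p
  proof -
    have "f x -` {p} \<inter> space MA \<in> sets MA" using assms(7)[of x] by (simp add: measurable_sets)
    hence "LA -` (f x -` {p} \<inter> space MA) \<inter> space M \<in> events" by (rule measurable_sets[OF mLA])
    moreover have "LA -` (f x -` {p} \<inter> space MA) \<inter> space M = U x p"
      using mLA unfolding U_def by (auto simp: measurable_space)
    ultimately show ?thesis by simp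
  qed
  have evV: "V y q \<in> events" for y q
  proof -
    have "g y \<beta>0 -` {q} \<inter> space MB \<in> sets MB" using assms(8)[of y \<beta>0] by (simp add: measurable_sets)
    hence "LB -` (g y \<beta>0 -` {q} \<inter> space MB) \<inter> space M \<in> events" by (rule measurable_sets[OF mLB])
    moreover have "LB -` (g y \<beta>0 -` {q} \<inter> space MB) \<inter> space M = V y q"
      using mLB unfolding V_def by (auto simp: measurable_space)
    ultimately show ?thesis by simp
  qed
  have prodeq: "prob (U x p \<inter> V y q \<inter> E x y) = prob (U x p) * prob (V y q) * prob (E x y)" for x y p q
  proof -
    define A where "A i = (if i = (0::nat) then U x p else if i = 1 then V y q else E x y)" for i
    have "U x p \<in> {LA -` A \<inter> space M | A. A \<in> sets MA}"
    proof -
      have "f x -` {p} \<inter> space MA \<in> sets MA" using assms(7)[of x] by (simp add: measurable_sets)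
      moreover have "LA -` (f x -` {p} \<inter> space MA) \<inter> space M = U x p"
        using mLA unfolding U_def by (auto simp: measurable_space)
      ultimately show ?thesis by blast
    qed
    moreover have "V y q \<in> {LB -` A \<inter> space M | A. A \<in> sets MB}"
    proof -
      have "g y \<beta>0 -` {q} \<inter> space MB \<in> sets MB" using assms(8)[of y \<beta>0] by (simp add: measurable_sets)
      moreover have "LB -` (g y \<beta>0 -` {q} \<inter> space MB) \<inter> space M = V y q"
        using mLB unfolding V_def by (auto simp: measurable_space)
      ultimately show ?thesis by blast
    qed
    moreover have "E x y \<in> {(\<lambda>w. (X w, Y w, B w)) -` A \<inter> space M | A. A \<in> sets (count_space UNIV)}"
    proof -
      have "(\<lambda>w. (X w, Y w, B w)) -` {(x, y, \<beta>0)} \<inter> space M = E x y" unfolding E_def by auto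
      thus ?thesis by (intro CollectI exI[of _ "{(x, y, \<beta>0)}"]) simp
    qed
    ultimately have "prob (\<Inter>j\<in>{0,1,2}. A j) = (\<Prod>j\<in>{0,1,2}. prob (A j))"
      by (intro indep_setsD[OF isets]) (auto simp: A_def)
    thus ?thesis by (simp add: A_def Int_ac mult_ac)
  qed
  have bad0: "prob (U x p \<inter> V y q \<inter> E x y) = 0" if "(p \<noteq> q) \<noteq> (x \<and> y)" for x y p q
  proof -
    have "AE w in M. \<not> (w \<in> U x p \<inter> V y q \<inter> E x y)"
      using assms(9) by eventually_elim (use that in \<open>auto simp: U_def V_def E_def\<close>)
    from emeasure_eq_0_AE[OF this] have "emeasure M (U x p \<inter> V y q \<inter> E x y) = 0"
      by (simp add: U_def V_def E_def Collect_conj_eq Int_ac)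
    thus ?thesis by (simp add: measure_def)
  qed
  have exU: "\<exists>p. prob (U x p) > 0" for x
  proof (rule ccontr)
    assume "\<not> ?thesis"
    hence "prob (U x True) = 0" "prob (U x False) = 0" using measure_nonneg[of M] by (metis not_less order.antisym)+
    moreover have "U x False = space M - U x True" unfolding U_def by auto
    ultimately show False using prob_compl[OF evU[of x True]] by simp
  qed
  have exV: "\<exists>q. prob (V y q) > 0" for y
  proof (rule ccontr)
    assume "\<not> ?thesis"
    hence "prob (V y True) = 0" "prob (V y False) = 0" using measure_nonneg[of M] by (metis not_less order.antisym)+
    moreover have "V y False = space M - V y True" unfolding V_def by auto
    ultimately show False using prob_compl[OF evV[of y True]] by simp
  qed
  obtain pp where pp: "\<And>x. prob (U x (pp x)) > 0" using exU by metis
  obtain qq where qq: "\<And>y. prob (V y (qq y)) > 0" using exV by metis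
  show "\<exists>x0 y0. \<P>(w in M. X w = x0 \<and> Y w = y0 \<bar> B w = \<beta>0) = 0"
  proof (rule ccontr)
    assume "\<not> ?thesis"
    hence nz: "\<P>(w in M. X w = x \<and> Y w = y \<bar> B w = \<beta>0) \<noteq> 0" for x y by blast
    have pE: "prob (E x y) > 0" for x y
    proof -
      have "\<P>(w in M. X w = x \<and> Y w = y \<bar> B w = \<beta>0) = prob (E x y) / \<P>(w in M. B w = \<beta>0)"
        unfolding cond_prob_def E_def by (simp add: conj_assoc)
      with nz[of x y] have "prob (E x y) \<noteq> 0" by auto
      thus ?thesis using measure_nonneg[of M "E x y"] by linarith
    qed
    have good: "(pp x \<noteq> qq y) = (x \<and> y)" for x y
    proof (rule ccontr)
      assume "(pp x \<noteq> qq y) \<noteq> (x \<and> y)"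
      from bad0[OF this] prodeq[of x "pp x" y "qq y"] have "prob (U x (pp x)) * prob (V y (qq y)) * prob (E x y) = 0" by simp
      with pp[of x] qq[of y] pE[of x y] show False by simp
    qed
    from good[of False False] good[of False True] good[of True False] good[of True True]
    show False by blast
  qed
qed

end
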